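(* Let $(X,d)$ be a metric space and $o\in X$ a point. If $X$ admits a conical bicombing $\phi$, then the metric space $(\mathrm{CBI}(X),D_o)$ admits a conical bicombing $\Phi$ such that the subset $\mathrm{RCBI}(X)\subset\mathrm{CBI}(X)$ of all reversible conical bicombings on $X$ is $\Phi$-convex.
   Context: A bicombing on a metric space $(Y,d)$ is a map $\sigma\colon Y\times Y\times[0,1]\to Y$ such that each $\sigma_{xy}:=\sigma(x,y,\cdot)$ is a geodesic from $x$ to $y$ ($\sigma_{xy}(0)=x$, $\sigma_{xy}(1)=y$, $d(\sigma_{xy}(s),\sigma_{xy}(t))=|s-t|d(x,y)$); it is conical if $d(\sigma_{xy}(t),\sigma_{x'y'}(t))\le(1-t)d(x,x')+t\,d(y,y')$ for all $x,y,x',y'$, $t\in[0,1]$, and reversible if $\sigma_{xy}(t)=\sigma_{yx}(1-t)$. $\mathrm{CBI}(X)$ is the set of all conical bicombings on $X$, with metric $D_o(\sigma,\tau):=\sup\{3^{-k}d(\sigma_{xy}(t),\tau_{xy}(t)) : k\ge 0,\ x,y\in B_{2^k}(o),\ t\in[0,1]\}$, where $B_r(o)$ is the ball of radius $r$ about $o$. A subset $A$ of $\mathrm{CBI}(X)$ is $\Phi$-convex if $\Phi(\sigma,\tau,t)\in A$ for all $\sigma,\tau\in A$, $t\in[0,1]$. *)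

theory Defs
  imports "HOL-Analysis.Analysis"
begin

definition geodesic_on :: "'b set \<Rightarrow> ('b \<Rightarrow> 'b \<Rightarrow> real) \<Rightarrow> 'b \<Rightarrow> 'b \<Rightarrow> (real \<Rightarrow> 'b) \<Rightarrow> bool" where
  "geodesic_on Y d x y g \<longleftrightarrow> g 0 = x \<and> g 1 = y \<and>
     (\<forall>s\<in>{0..1}. g s \<in> Y) \<and>
     (\<forall>s\<in>{0..1}. \<forall>t\<in>{0..1}. d (g s) (g t) = \<bar>s - t\<bar> * d x y)"

definition bicombing_on :: "'b set \<Rightarrow> ('b \<Rightarrow> 'b \<Rightarrow> real) \<Rightarrow> ('b \<Rightarrow> 'b \<Rightarrow> real \<Rightarrow> 'b) \<Rightarrow> bool" where
  "bicombing_on Y d \<sigma> \<longleftrightarrow> (\<forall>x\<in>Y. \<forall>y\<in>Y. geodesic_on Y d x y (\<sigma> x y))"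

definition conical_bicombing_on :: "'b set \<Rightarrow> ('b \<Rightarrow> 'b \<Rightarrow> real) \<Rightarrow> ('b \<Rightarrow> 'b \<Rightarrow> real \<Rightarrow> 'b) \<Rightarrow> bool" where
  "conical_bicombing_on Y d \<sigma> \<longleftrightarrow> bicombing_on Y d \<sigma> \<and>
     (\<forall>x\<in>Y. \<forall>y\<in>Y. \<forall>x'\<in>Y. \<forall>y'\<in>Y. \<forall>t\<in>{0..1}.
        d (\<sigma> x y t) (\<sigma> x' y' t) \<le> (1 - t) * d x x' + t * d y y')"

text \<open>A bicombing is a map on X \<times> X \<times> [0,1]; to represent it by a unique HOL
  function we require the value undefined for parameters outside [0,1].\<close>

definition CBI :: "('a::metric_space \<Rightarrow> 'a \<Rightarrow> real \<Rightarrow> 'a) set" where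
  "CBI = {\<sigma>. conical_bicombing_on UNIV dist \<sigma> \<and>
                (\<forall>x y t. t \<notin> {0..1} \<longrightarrow> \<sigma> x y t = undefined)}"

definition reversible :: "('a \<Rightarrow> 'a \<Rightarrow> real \<Rightarrow> 'a) \<Rightarrow> bool" where
  "reversible \<sigma> \<longleftrightarrow> (\<forall>x y. \<forall>t\<in>{0..1}. \<sigma> x y t = \<sigma> y x (1 - t))"

definition RCBI :: "('a::metric_space \<Rightarrow> 'a \<Rightarrow> real \<Rightarrow> 'a) set" where
  "RCBI = {\<sigma>\<in>CBI. reversible \<sigma>}"

text \<open>The metric D_o on CBI(X); B_r(o) is taken to be the closed ball.\<close>

definition D :: "'a::metric_space \<Rightarrow> ('a \<Rightarrow> 'a \<Rightarrow> real \<Rightarrow> 'a) \<Rightarrow> ('a \<Rightarrow> 'a \<Rightarrow> real \<Rightarrow> 'a) \<Rightarrow> real" where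
  "D p \<sigma> \<tau> = Sup {(1/3) ^ k * dist (\<sigma> x y t) (\<tau> x y t) | k x y t.
                      x \<in> cball p (2 ^ k) \<and> y \<in> cball p (2 ^ k) \<and> t \<in> {0..1}}"

definition convex_wrt :: "('c \<Rightarrow> 'c \<Rightarrow> real \<Rightarrow> 'c) \<Rightarrow> 'c set \<Rightarrow> bool" where
  "convex_wrt \<Phi> A \<longleftrightarrow> (\<forall>\<sigma>\<in>A. \<forall>\<tau>\<in>A. \<forall>t\<in>{0..1}. \<Phi> \<sigma> \<tau> t \<in> A)"

end

theory Submission
  imports Defs
begin

definition PhiC :: "('a \<Rightarrow> 'a \<Rightarrow> real \<Rightarrow> 'a) \<Rightarrow> ('a \<Rightarrow> 'a \<Rightarrow> real \<Rightarrow> 'a) \<Rightarrow> ('a \<Rightarrow> 'a \<Rightarrow> real \<Rightarrow> 'a) \<Rightarrow> real \<Rightarrow> ('a \<Rightarrow> 'a \<Rightarrow> real \<Rightarrow> 'a)" where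
  "PhiC \<phi> \<sigma> \<tau> s = (\<lambda>x y t. if t \<in> {0..1} then \<phi> (\<sigma> x y t) (\<tau> x y t) s else undefined)"

lemma cb_geo:
  fixes \<phi> :: "'a::metric_space \<Rightarrow> 'a \<Rightarrow> real \<Rightarrow> 'a"
  assumes "conical_bicombing_on UNIV dist \<phi>"
  shows "\<phi> u v 0 = u" "\<phi> u v 1 = v"
    "s \<in> {0..1} \<Longrightarrow> s' \<in> {0..1} \<Longrightarrow> dist (\<phi> u v s) (\<phi> u v s') = \<bar>s - s'\<bar> * dist u v"
  using assms unfolding conical_bicombing_on_def bicombing_on_def geodesic_on_def by auto

lemma cb_con:
  fixes \<phi> :: "'a::metric_space \<Rightarrow> 'a \<Rightarrow> real \<Rightarrow> 'a"
  assumes "conical_bicombing_on UNIV dist \<phi>" "t \<in> {0..1}"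
  shows "dist (\<phi> x y t) (\<phi> x' y' t) \<le> (1 - t) * dist x x' + t * dist y y'"
  using assms unfolding conical_bicombing_on_def by auto

lemma cb_same:
  fixes \<phi> :: "'a::metric_space \<Rightarrow> 'a \<Rightarrow> real \<Rightarrow> 'a"
  assumes "conical_bicombing_on UNIV dist \<phi>" "s \<in> {0..1}"
  shows "\<phi> u u s = u"
proof -
  have "dist (\<phi> u u s) (\<phi> u u 0) = 0" using cb_geo(3)[OF assms(1) assms(2), of 0 u u] by simp
  then show ?thesis using cb_geo(1)[OF assms(1)] by simp
qed

lemma CBI_D:
  fixes \<sigma> :: "'a::metric_space \<Rightarrow> 'a \<Rightarrow> real \<Rightarrow> 'a"
  assumes "\<sigma> \<in> CBI"
  shows "conical_bicombing_on UNIV dist \<sigma>" "t \<notin> {0..1} \<Longrightarrow> \<sigma> x y t = undefined"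
  using assms unfolding CBI_def by auto

lemma cb_lipgeo:
  fixes g :: "real \<Rightarrow> 'a::metric_space"
  assumes g0: "g 0 = x" and g1: "g 1 = y"
    and ub: "\<And>t t'. t \<in> {0..1} \<Longrightarrow> t' \<in> {0..1} \<Longrightarrow> dist (g t) (g t') \<le> \<bar>t - t'\<bar> * dist x y"
    and t: "t \<in> {0..1}" and t': "t' \<in> {0..1}"
  shows "dist (g t) (g t') = \<bar>t - t'\<bar> * dist x y"
proof -
  have key: "dist (g a) (g b) = \<bar>a - b\<bar> * dist x y" if a: "a \<in> {0..1}" and b: "b \<in> {0..1}" and ab: "a \<le> b" for a b
  proof -
    have 1: "dist x (g a) \<le> a * dist x y" using ub[of 0 a] a g0 by auto
    have 2: "dist (g b) y \<le> (1 - b) * dist x y" using ub[of b 1] b g1 by auto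
    have "dist x y \<le> dist x (g a) + dist (g a) (g b) + dist (g b) y"
      by (metis add_mono dist_triangle order_trans order_refl)
    then have "(b - a) * dist x y \<le> dist (g a) (g b)" using 1 2 by (simp add: algebra_simps)
    moreover have "dist (g a) (g b) \<le> \<bar>a - b\<bar> * dist x y" using ub a b by auto
    ultimately show ?thesis using ab by auto
  qed
  show ?thesis
  proof (cases "t \<le> t'")
    case True then show ?thesis using key t t' by auto
  next
    case False then show ?thesis using key[of t' t] t t' by (auto simp: dist_commute abs_minus_commute)
  qed
qed

lemma PhiC_CBI:
  fixes \<phi> :: "'a::metric_space \<Rightarrow> 'a \<Rightarrow> real \<Rightarrow> 'a"
  assumes cb: "conical_bicombing_on UNIV dist \<phi>"
    and s: "\<sigma> \<in> CBI" and tt: "\<tau> \<in> CBI" and sr: "s \<in> {0..1}"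
  shows "PhiC \<phi> \<sigma> \<tau> s \<in> CBI"
proof -
  note cs = CBI_D(1)[OF s] and ct = CBI_D(1)[OF tt]
  have geo: "geodesic_on UNIV dist x y (PhiC \<phi> \<sigma> \<tau> s x y)" for x y
  proof -
    let ?g = "PhiC \<phi> \<sigma> \<tau> s x y"
    have g0: "?g 0 = x" using cb_geo(1)[OF cs] cb_geo(1)[OF ct] cb_same[OF cb sr]
      by (simp add: PhiC_def)
    have g1: "?g 1 = y" using cb_geo(2)[OF cs] cb_geo(2)[OF ct] cb_same[OF cb sr]
      by (simp add: PhiC_def)
    have ub: "dist (?g a) (?g b) \<le> \<bar>a - b\<bar> * dist x y" if a: "a \<in> {0..1}" and b: "b \<in> {0..1}" for a b
    proof -
      have "dist (?g a) (?g b) \<le> (1 - s) * dist (\<sigma> x y a) (\<sigma> x y b) + s * dist (\<tau> x y a) (\<tau> x y b)"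
        using cb_con[OF cb sr] a b by (simp add: PhiC_def)
      also have "\<dots> = (1 - s) * (\<bar>a - b\<bar> * dist x y) + s * (\<bar>a - b\<bar> * dist x y)"
        using cb_geo(3)[OF cs a b] cb_geo(3)[OF ct a b] by simp
      also have "\<dots> = \<bar>a - b\<bar> * dist x y" by (simp add: algebra_simps)
      finally show ?thesis .
    qed
    show ?thesis unfolding geodesic_on_def
      using g0 g1 cb_lipgeo[of ?g x y, OF g0 g1 ub] by auto
  qed
  have con: "dist (PhiC \<phi> \<sigma> \<tau> s x y t) (PhiC \<phi> \<sigma> \<tau> s x' y' t) \<le> (1 - t) * dist x x' + t * dist y y'"
    if t: "t \<in> {0..1}" for x y x' y' t
  proof -
    have "dist (PhiC \<phi> \<sigma> \<tau> s x y t) (PhiC \<phi> \<sigma> \<tau> s x' y' t) \<le>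
       (1 - s) * dist (\<sigma> x y t) (\<sigma> x' y' t) + s * dist (\<tau> x y t) (\<tau> x' y' t)"
      using cb_con[OF cb sr] t by (simp add: PhiC_def)
    also have "\<dots> \<le> (1 - s) * ((1 - t) * dist x x' + t * dist y y') + s * ((1 - t) * dist x x' + t * dist y y')"
      apply (rule add_mono; rule mult_left_mono)
      using cb_con[OF cs t] cb_con[OF ct t] sr by auto
    also have "\<dots> = (1 - t) * dist x x' + t * dist y y'" by (simp add: algebra_simps)
    finally show ?thesis .
  qed
  show ?thesis unfolding CBI_def conical_bicombing_on_def bicombing_on_def
    using geo con by (auto simp: PhiC_def)
qed

lemma D_ne: "{(1/3) ^ k * dist (\<sigma> x y t) (\<tau> x y t) | k x y t.
                      x \<in> cball p (2 ^ k) \<and> y \<in> cball p (2 ^ k) \<and> t \<in> {0..(1::real)}} \<noteq> {}"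
proof -
  have "(1/3) ^ (0::nat) * dist (\<sigma> p p 0) (\<tau> p p 0) \<in> {(1/3) ^ k * dist (\<sigma> x y t) (\<tau> x y t) | k x y t.
                      x \<in> cball p (2 ^ k) \<and> y \<in> cball p (2 ^ k) \<and> t \<in> {0..(1::real)}}"
    by (rule CollectI, rule exI[of _ 0], rule exI[of _ p], rule exI[of _ p], rule exI[of _ 0]) simp
  then show ?thesis by blast
qed

lemma D_le:
  fixes p :: "'a::metric_space"
  assumes "\<And>k x y t. x \<in> cball p (2 ^ k) \<Longrightarrow> y \<in> cball p (2 ^ k) \<Longrightarrow> t \<in> {0..1} \<Longrightarrow>
     (1/3) ^ k * dist (\<sigma> x y t) (\<tau> x y t) \<le> B"
  shows "D p \<sigma> \<tau> \<le> B"
  unfolding D_def by (rule cSup_least[OF D_ne]) (use assms in auto)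

lemma D_ge:
  fixes p :: "'a::metric_space"
  assumes s: "\<sigma> \<in> CBI" and tt: "\<tau> \<in> CBI"
    and x: "x \<in> cball p (2 ^ k)" and y: "y \<in> cball p (2 ^ k)" and t: "t \<in> {0..1}"
  shows "(1/3) ^ k * dist (\<sigma> x y t) (\<tau> x y t) \<le> D p \<sigma> \<tau>"
proof -
  have bd: "(1/3) ^ k * dist (\<sigma> x y t) (\<tau> x y t) \<le> 4"
    if x: "x \<in> cball p (2 ^ k)" and y: "y \<in> cball p (2 ^ k)" and t: "t \<in> {0..1}" for k x y t
  proof -
    have "dist (\<sigma> x y t) (\<tau> x y t) \<le> dist (\<sigma> x y t) (\<sigma> x y 0) + dist (\<tau> x y t) (\<tau> x y 0)"
      using cb_geo(1)[OF CBI_D(1)[OF s]] cb_geo(1)[OF CBI_D(1)[OF tt]]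
      by (metis dist_commute dist_triangle)
    also have "\<dots> = 2 * t * dist x y"
      using cb_geo(3)[OF CBI_D(1)[OF s] t, of 0] cb_geo(3)[OF CBI_D(1)[OF tt] t, of 0] t by auto
    also have "\<dots> \<le> 2 * dist x y" using t by (simp add: mult_left_le_one_le)
    also have "\<dots> \<le> 2 * (dist p x + dist p y)" using dist_triangle3[of x y p] by simp
    also have "\<dots> \<le> 4 * 2 ^ k" using x y by simp
    finally have h: "dist (\<sigma> x y t) (\<tau> x y t) \<le> 4 * 2 ^ k" .
    have "(1/3) ^ k * dist (\<sigma> x y t) (\<tau> x y t) \<le> (1/3) ^ k * (4 * 2 ^ k)"
      by (rule mult_left_mono[OF h]) simp
    also have "\<dots> = 4 * (2/3) ^ k" by (simp add: power_divide)
    also have "\<dots> \<le> 4" by (simp add: power_le_one)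
    finally show ?thesis .
  qed
  show ?thesis unfolding D_def
    by (rule cSup_upper) (use x y t bd in \<open>auto intro!: bdd_aboveI[of _ 4]\<close>)
qed

lemma D_nonneg:
  fixes p :: "'a::metric_space"
  assumes s: "\<sigma> \<in> CBI" and tt: "\<tau> \<in> CBI"
  shows "0 \<le> D p \<sigma> \<tau>"
  using D_ge[OF s tt, of p p 0 p 0] by (simp add: order_trans[OF zero_le_dist])



lemma PhiC_0:
  fixes \<phi> :: "'a::metric_space \<Rightarrow> 'a \<Rightarrow> real \<Rightarrow> 'a"
  assumes cb: "conical_bicombing_on UNIV dist \<phi>" and s: "\<sigma> \<in> CBI"
  shows "PhiC \<phi> \<sigma> \<tau> 0 = \<sigma>"
  using cb_geo(1)[OF cb] CBI_D(2)[OF s] by (auto simp: PhiC_def fun_eq_iff)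

lemma PhiC_1:
  fixes \<phi> :: "'a::metric_space \<Rightarrow> 'a \<Rightarrow> real \<Rightarrow> 'a"
  assumes cb: "conical_bicombing_on UNIV dist \<phi>" and s: "\<tau> \<in> CBI"
  shows "PhiC \<phi> \<sigma> \<tau> 1 = \<tau>"
  using cb_geo(2)[OF cb] CBI_D(2)[OF s] by (auto simp: PhiC_def fun_eq_iff)

lemma PhiC_dist:
  fixes \<phi> :: "'a::metric_space \<Rightarrow> 'a \<Rightarrow> real \<Rightarrow> 'a" and p :: 'a
  assumes cb: "conical_bicombing_on UNIV dist \<phi>"
    and s: "\<sigma> \<in> CBI" and tt: "\<tau> \<in> CBI" and a: "a \<in> {0..1}" and b: "b \<in> {0..1}"
  shows "D p (PhiC \<phi> \<sigma> \<tau> a) (PhiC \<phi> \<sigma> \<tau> b) = \<bar>a - b\<bar> * D p \<sigma> \<tau>"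
proof -
  have pw: "dist (PhiC \<phi> \<sigma> \<tau> a x y t) (PhiC \<phi> \<sigma> \<tau> b x y t) = \<bar>a - b\<bar> * dist (\<sigma> x y t) (\<tau> x y t)"
    if t: "t \<in> {0..1}" for x y t
    using cb_geo(3)[OF cb a b] t by (simp add: PhiC_def)
  have A: "PhiC \<phi> \<sigma> \<tau> a \<in> CBI" "PhiC \<phi> \<sigma> \<tau> b \<in> CBI" using PhiC_CBI[OF cb s tt] a b by auto
  show ?thesis
  proof (rule antisym)
    show "D p (PhiC \<phi> \<sigma> \<tau> a) (PhiC \<phi> \<sigma> \<tau> b) \<le> \<bar>a - b\<bar> * D p \<sigma> \<tau>"
    proof (rule D_le)
      fix k x y t assume h: "x \<in> cball p (2 ^ k)" "y \<in> cball p (2 ^ k)" "(t::real) \<in> {0..1}"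
      have "(1/3) ^ k * dist (PhiC \<phi> \<sigma> \<tau> a x y t) (PhiC \<phi> \<sigma> \<tau> b x y t)
          = \<bar>a - b\<bar> * ((1/3) ^ k * dist (\<sigma> x y t) (\<tau> x y t))" using pw[OF h(3)] by simp
      also have "\<dots> \<le> \<bar>a - b\<bar> * D p \<sigma> \<tau>"
        by (rule mult_left_mono[OF D_ge[OF s tt h]]) simp
      finally show "(1/3) ^ k * dist (PhiC \<phi> \<sigma> \<tau> a x y t) (PhiC \<phi> \<sigma> \<tau> b x y t) \<le> \<bar>a - b\<bar> * D p \<sigma> \<tau>" .
    qed
  next
    show "\<bar>a - b\<bar> * D p \<sigma> \<tau> \<le> D p (PhiC \<phi> \<sigma> \<tau> a) (PhiC \<phi> \<sigma> \<tau> b)"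
    proof (cases "a = b")
      case True then show ?thesis using D_nonneg[OF A] by simp
    next
      case False
      then have c: "\<bar>a - b\<bar> > 0" by simp
      have "D p \<sigma> \<tau> \<le> D p (PhiC \<phi> \<sigma> \<tau> a) (PhiC \<phi> \<sigma> \<tau> b) / \<bar>a - b\<bar>"
      proof (rule D_le)
        fix k x y t assume h: "x \<in> cball p (2 ^ k)" "y \<in> cball p (2 ^ k)" "(t::real) \<in> {0..1}"
        have "(1/3) ^ k * dist (\<sigma> x y t) (\<tau> x y t)
            = ((1/3) ^ k * dist (PhiC \<phi> \<sigma> \<tau> a x y t) (PhiC \<phi> \<sigma> \<tau> b x y t)) / \<bar>a - b\<bar>"
          using pw[OF h(3)] c by simp
        also have "\<dots> \<le> D p (PhiC \<phi> \<sigma> \<tau> a) (PhiC \<phi> \<sigma> \<tau> b) / \<bar>a - b\<bar>"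
          by (rule divide_right_mono[OF D_ge[OF A h]]) simp
        finally show "(1/3) ^ k * dist (\<sigma> x y t) (\<tau> x y t) \<le> D p (PhiC \<phi> \<sigma> \<tau> a) (PhiC \<phi> \<sigma> \<tau> b) / \<bar>a - b\<bar>" .
      qed
      then show ?thesis using c by (simp add: field_simps)
    qed
  qed
qed

lemma PhiC_con:
  fixes \<phi> :: "'a::metric_space \<Rightarrow> 'a \<Rightarrow> real \<Rightarrow> 'a" and p :: 'a
  assumes cb: "conical_bicombing_on UNIV dist \<phi>"
    and s: "\<sigma> \<in> CBI" and tt: "\<tau> \<in> CBI" and s': "\<sigma>' \<in> CBI" and tt': "\<tau>' \<in> CBI" and a: "a \<in> {0..1}"
  shows "D p (PhiC \<phi> \<sigma> \<tau> a) (PhiC \<phi> \<sigma>' \<tau>' a) \<le> (1 - a) * D p \<sigma> \<sigma>' + a * D p \<tau> \<tau>'"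
proof (rule D_le)
  fix k and x y :: 'a and t assume h: "x \<in> cball p (2 ^ k)" "y \<in> cball p (2 ^ k)" "(t::real) \<in> {0..1}"
  have "dist (PhiC \<phi> \<sigma> \<tau> a x y t) (PhiC \<phi> \<sigma>' \<tau>' a x y t) \<le>
      (1 - a) * dist (\<sigma> x y t) (\<sigma>' x y t) + a * dist (\<tau> x y t) (\<tau>' x y t)"
    using cb_con[OF cb a] h(3) by (simp add: PhiC_def)
  then have "(1/3) ^ k * dist (PhiC \<phi> \<sigma> \<tau> a x y t) (PhiC \<phi> \<sigma>' \<tau>' a x y t) \<le>
      (1 - a) * ((1/3) ^ k * dist (\<sigma> x y t) (\<sigma>' x y t)) + a * ((1/3) ^ k * dist (\<tau> x y t) (\<tau>' x y t))"
    by (rule order_trans[OF mult_left_mono]) (auto simp: algebra_simps)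
  also have "\<dots> \<le> (1 - a) * D p \<sigma> \<sigma>' + a * D p \<tau> \<tau>'"
    apply (rule add_mono; rule mult_left_mono)
    using D_ge[OF s s' h] D_ge[OF tt tt' h] a by auto
  finally show "(1/3) ^ k * dist (PhiC \<phi> \<sigma> \<tau> a x y t) (PhiC \<phi> \<sigma>' \<tau>' a x y t) \<le> (1 - a) * D p \<sigma> \<sigma>' + a * D p \<tau> \<tau>'" .
qed

theorem lemma4p2:
  fixes p :: "'a::metric_space"
  assumes "\<exists>\<phi> :: 'a \<Rightarrow> 'a \<Rightarrow> real \<Rightarrow> 'a. conical_bicombing_on UNIV dist \<phi>"
  shows "\<exists>\<Phi>. conical_bicombing_on (CBI :: ('a \<Rightarrow> 'a \<Rightarrow> real \<Rightarrow> 'a) set) (D p) \<Phi>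
              \<and> convex_wrt \<Phi> (RCBI :: ('a \<Rightarrow> 'a \<Rightarrow> real \<Rightarrow> 'a) set)"
proof -
  obtain \<phi> :: "'a \<Rightarrow> 'a \<Rightarrow> real \<Rightarrow> 'a" where cb: "conical_bicombing_on UNIV dist \<phi>" using assms by blast
  have 1: "conical_bicombing_on CBI (D p) (PhiC \<phi>)"
    unfolding conical_bicombing_on_def bicombing_on_def geodesic_on_def
  proof (intro conjI ballI)
    fix \<sigma> \<tau> :: "'a \<Rightarrow> 'a \<Rightarrow> real \<Rightarrow> 'a" and s t :: real assume h: "\<sigma> \<in> CBI" "\<tau> \<in> CBI" "s \<in> {0..1}" "t \<in> {0..1}"
    show "D p (PhiC \<phi> \<sigma> \<tau> s) (PhiC \<phi> \<sigma> \<tau> t) = \<bar>s - t\<bar> * D p \<sigma> \<tau>"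
      by (rule PhiC_dist[OF cb h])
  next
    fix \<sigma> \<tau> :: "'a \<Rightarrow> 'a \<Rightarrow> real \<Rightarrow> 'a" and s assume h: "\<sigma> \<in> CBI" "\<tau> \<in> CBI" "s \<in> {0..(1::real)}"
    show "PhiC \<phi> \<sigma> \<tau> s \<in> CBI" by (rule PhiC_CBI[OF cb h])
  next
    fix \<sigma> \<tau> \<sigma>' \<tau>' :: "'a \<Rightarrow> 'a \<Rightarrow> real \<Rightarrow> 'a" and t assume h: "\<sigma> \<in> CBI" "\<tau> \<in> CBI" "\<sigma>' \<in> CBI" "\<tau>' \<in> CBI" "t \<in> {0..(1::real)}"
    show "D p (PhiC \<phi> \<sigma> \<tau> t) (PhiC \<phi> \<sigma>' \<tau>' t) \<le> (1 - t) * D p \<sigma> \<sigma>' + t * D p \<tau> \<tau>'"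
      by (rule PhiC_con[OF cb h])
  qed (auto simp: PhiC_0[OF cb] PhiC_1[OF cb])
  have 2: "convex_wrt (PhiC \<phi>) RCBI"
    unfolding convex_wrt_def
  proof (intro ballI)
    fix \<sigma> \<tau> :: "'a \<Rightarrow> 'a \<Rightarrow> real \<Rightarrow> 'a" and s assume h: "\<sigma> \<in> RCBI" "\<tau> \<in> RCBI" "(s::real) \<in> {0..1}"
    then have c: "\<sigma> \<in> CBI" "\<tau> \<in> CBI" "reversible \<sigma>" "reversible \<tau>" unfolding RCBI_def by auto
    have "reversible (PhiC \<phi> \<sigma> \<tau> s)"
      unfolding reversible_def
    proof (intro allI ballI)
      fix x y and t :: real assume t: "t \<in> {0..1}"
      then have "1 - t \<in> {0..1}" by auto
      then show "PhiC \<phi> \<sigma> \<tau> s x y t = PhiC \<phi> \<sigma> \<tau> s y x (1 - t)"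
      proof -
        have "\<sigma> x y t = \<sigma> y x (1 - t)" "\<tau> x y t = \<tau> y x (1 - t)"
          using t c(3,4) unfolding reversible_def by blast+
        then show ?thesis unfolding PhiC_def if_P[OF t] if_P[OF \<open>1 - t \<in> {0..1}\<close>] by (simp only:)
      qed
    qed
    then show "PhiC \<phi> \<sigma> \<tau> s \<in> RCBI" using PhiC_CBI[OF cb c(1,2) h(3)] unfolding RCBI_def by auto
  qed
  show ?thesis using 1 2 by blast
qed

end
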